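(* Let $\beta>0$, $g\in\mathcal C(\mathbb R^d)$, $v^*\in\mathbb R^d$, and $\rho$ a probability measure on $\mathbb R^d$ with finite first moment and $v^*\in\operatorname{supp}(\rho)$; set $g^*:=g(v^* )$, $g_r:=\sup_{v\in B_r(v^* )}g(v)-g^*$ for $r>0$, and for $\alpha>0$, $v_\alpha(\rho):=\int we^{-\alpha g(w)}d\rho(w)/\int e^{-\alpha g(w)}d\rho(w)$. (a) If there are $\eta,\nu>0$ with $g(v)-g^*\ge(\eta\|v-v^*\|_2)^{1/\nu}-\beta$ for all $v\in\mathbb R^d$, then for all $r>0$ and $q>\beta$, $$\|v_\alpha(\rho)-v^*\|_2\le\frac{(q+g_r)^\nu}{\eta}+\frac{\exp(-\alpha(q-\beta))}{\rho(B_r(v^* ))}\int\|v-v^*\|_2d\rho(v).\qquad( * )$$ (b) If there are $g_\infty,R_0,\eta>0$ and $\nu\in(0,\infty)$ with $g(v)-g^*\ge(\eta\|v-v^*\|_2)^{1/\nu}-\beta$ for all $v\in B_{R_0}(v^* )$ and $g(v)-g^*>g_\infty$ for all $v\notin B_{R_0}(v^* )$, then $( * )$ holds for all $r\in(0,R_0]$ and $q>\beta$ with $q-\beta+g_r\le g_\infty$.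
   Context: $B_r(v)$ denotes the open Euclidean ball of radius $r$ centered at $v$; $\operatorname{supp}(\rho)$ the support of $\rho$. *)

theory Defs
  imports "HOL-Probability.Probability"
begin

definition msupp :: "'a::metric_space measure \<Rightarrow> 'a set" where
  "msupp \<rho> = {x. \<forall>r>0. measure \<rho> (ball x r) > 0}"

definition g_rad :: "('a::metric_space \<Rightarrow> real) \<Rightarrow> 'a \<Rightarrow> real \<Rightarrow> real" where
  "g_rad g vstar r = (SUP v\<in>ball vstar r. g v) - g vstar"

definition v_alpha :: "real \<Rightarrow> ('a::euclidean_space \<Rightarrow> real) \<Rightarrow> 'a measure \<Rightarrow> 'a" where
  "v_alpha \<alpha> g \<rho> =
     (integral\<^sup>L \<rho> (\<lambda>w. exp (- \<alpha> * g w) *\<^sub>R w)) /\<^sub>R (integral\<^sup>L \<rho> (\<lambda>w. exp (- \<alpha> * g w)))"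

end

theory Submission
  imports Defs
begin

lemma core:
  fixes g :: "'a::euclidean_space \<Rightarrow> real" and \<rho> :: "'a measure"
  assumes ps: "prob_space \<rho>" and sets: "sets \<rho> = sets borel" and int: "integrable \<rho> (\<lambda>v. norm v)"
   and gm: "continuous_on UNIV g" and lb: "\<forall>v. c \<le> g v" and \<alpha>: "\<alpha> > 0" and rt: "rt \<ge> 0"
   and far: "\<forall>v. rt \<le> norm (v - vstar) \<longrightarrow> g vstar + L \<le> g v"
   and near: "\<forall>v\<in>ball vstar r. g v \<le> g vstar + G"
   and mpos: "measure \<rho> (ball vstar r) > 0"
  shows "norm (v_alpha \<alpha> g \<rho> - vstar) \<le> rt + exp (- \<alpha> * (L - G)) / measure \<rho> (ball vstar r) * (\<integral>v. norm (v - vstar) \<partial>\<rho>)"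
proof -
  interpret prob_space \<rho> by (fact ps)
  have meas_eq: "\<And>N. measurable \<rho> N = measurable borel N" by (rule measurable_cong_sets[OF sets refl])
  have gb: "g \<in> borel_measurable \<rho>" unfolding meas_eq using gm by (rule borel_measurable_continuous_onI)
  have idb: "(\<lambda>v. v) \<in> borel_measurable \<rho>" unfolding meas_eq by simp
  define w where "w = (\<lambda>v. exp (- \<alpha> * g v))"
  have wb: "w \<in> borel_measurable \<rho>" unfolding w_def using gb by measurable
  have wpos: "\<And>v. w v > 0" unfolding w_def by simp
  have wle: "\<And>v. w v \<le> exp (- \<alpha> * c)" unfolding w_def using lb \<alpha> by simp
  have wint: "integrable \<rho> w"
    by (rule integrable_const_bound[where B="exp (- \<alpha> * c)"]) (use wpos wle wb in \<open>auto simp: less_imp_le\<close>)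
  have idint: "integrable \<rho> (\<lambda>v. v)" using int idb integrable_norm_iff by blast
  have dint: "integrable \<rho> (\<lambda>v. v - vstar)" using idint by simp
  have nint: "integrable \<rho> (\<lambda>v. norm (v - vstar))" using dint by (rule integrable_norm)
  have wvint: "integrable \<rho> (\<lambda>v. w v *\<^sub>R v)"
  proof (rule Bochner_Integration.integrable_bound)
    show "integrable \<rho> (\<lambda>v. exp (- \<alpha> * c) * norm v)" using int by simp
    show "(\<lambda>v. w v *\<^sub>R v) \<in> borel_measurable \<rho>" using wb idb by measurable
    show "AE v in \<rho>. norm (w v *\<^sub>R v) \<le> norm (exp (- \<alpha> * c) * norm v)"
      using wpos wle by (auto intro!: mult_right_mono simp: less_imp_le)
  qed
  have wdint: "integrable \<rho> (\<lambda>v. w v *\<^sub>R (v - vstar))"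
    using wvint wint by (simp add: scaleR_diff_right)
  have wnint: "integrable \<rho> (\<lambda>v. w v * norm (v - vstar))"
  proof (rule Bochner_Integration.integrable_bound)
    show "integrable \<rho> (\<lambda>v. exp (- \<alpha> * c) * norm (v - vstar))" using nint by simp
    show "(\<lambda>v. w v * norm (v - vstar)) \<in> borel_measurable \<rho>" using wb idb by measurable
    show "AE v in \<rho>. norm (w v * norm (v - vstar)) \<le> norm (exp (- \<alpha> * c) * norm (v - vstar))"
      using wpos wle by (auto intro!: mult_right_mono simp: less_imp_le)
  qed
  define B where "B = ball vstar r"
  have Bm: "B \<in> sets \<rho>" unfolding B_def sets by simp
  define Z where "Z = (\<integral>v. w v \<partial>\<rho>)"
  define e0 where "e0 = exp (- \<alpha> * (g vstar + G))"
  have "measure \<rho> B * e0 = (\<integral>v. indicator B v * e0 \<partial>\<rho>)"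
    using Bm by simp
  also have "\<dots> \<le> Z" unfolding Z_def
  proof (rule integral_mono)
    show "integrable \<rho> (\<lambda>v. indicator B v * e0)" using Bm by (simp add: integrable_indicator_iff emeasure_eq_measure)
    show "integrable \<rho> w" by (fact wint)
    fix v show "indicator B v * e0 \<le> w v"
    proof (cases "v \<in> B")
      case True then have "g v \<le> g vstar + G" using near B_def by auto
      then show ?thesis using True \<alpha> unfolding w_def e0_def by simp
    qed (simp add: wpos less_imp_le)
  qed
  finally have Zlb: "measure \<rho> B * e0 \<le> Z" .
  have e0pos: "e0 > 0" unfolding e0_def by simp
  have Zpos: "Z > 0" using Zlb mpos e0pos B_def by (smt (verit) mult_pos_pos)
  define E where "E = exp (- \<alpha> * (g vstar + L))"
  have pw: "\<And>v. w v * norm (v - vstar) \<le> rt * w v + E * norm (v - vstar)"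
  proof -
    fix v
    show "w v * norm (v - vstar) \<le> rt * w v + E * norm (v - vstar)"
    proof (cases "rt \<le> norm (v - vstar)")
      case True
      then have "w v \<le> E" using far \<alpha> unfolding w_def E_def by simp
      then have "w v * norm (v - vstar) \<le> E * norm (v - vstar)" by (simp add: mult_right_mono)
      then show ?thesis using rt wpos[of v] by (smt (verit) mult_nonneg_nonneg)
    next
      case False
      then have "w v * norm (v - vstar) \<le> rt * w v" using wpos[of v] by (simp add: mult_left_mono mult.commute less_imp_le)
      then show ?thesis by (smt (verit) E_def exp_gt_zero mult_nonneg_nonneg norm_ge_zero)
    qed
  qed
  have I: "(\<integral>v. w v * norm (v - vstar) \<partial>\<rho>) \<le> rt * Z + E * (\<integral>v. norm (v - vstar) \<partial>\<rho>)"
  proof -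
    have "(\<integral>v. w v * norm (v - vstar) \<partial>\<rho>) \<le> (\<integral>v. rt * w v + E * norm (v - vstar) \<partial>\<rho>)"
      by (rule integral_mono) (use wnint wint nint pw in auto)
    also have "\<dots> = rt * Z + E * (\<integral>v. norm (v - vstar) \<partial>\<rho>)"
      using wint nint unfolding Z_def by simp
    finally show ?thesis .
  qed
  have va: "v_alpha \<alpha> g \<rho> - vstar = (\<integral>v. w v *\<^sub>R (v - vstar) \<partial>\<rho>) /\<^sub>R Z"
  proof -
    have "(\<integral>v. w v *\<^sub>R (v - vstar) \<partial>\<rho>) = (\<integral>v. w v *\<^sub>R v \<partial>\<rho>) - Z *\<^sub>R vstar"
      using wvint wint unfolding Z_def by (simp add: scaleR_diff_right)
    moreover have "v_alpha \<alpha> g \<rho> = (\<integral>v. w v *\<^sub>R v \<partial>\<rho>) /\<^sub>R Z"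
      unfolding v_alpha_def w_def Z_def by simp
    ultimately show ?thesis using Zpos by (simp add: scaleR_diff_right)
  qed
  have "norm (v_alpha \<alpha> g \<rho> - vstar) \<le> (\<integral>v. w v * norm (v - vstar) \<partial>\<rho>) / Z"
  proof -
    have "norm (\<integral>v. w v *\<^sub>R (v - vstar) \<partial>\<rho>) \<le> (\<integral>v. norm (w v *\<^sub>R (v - vstar)) \<partial>\<rho>)"
      by (rule integral_norm_bound)
    also have "\<dots> = (\<integral>v. w v * norm (v - vstar) \<partial>\<rho>)" using wpos by (simp add: less_imp_le)
    finally show ?thesis using va Zpos by (simp add: divide_right_mono field_simps)
  qed
  also have "\<dots> \<le> (rt * Z + E * (\<integral>v. norm (v - vstar) \<partial>\<rho>)) / Z"
    using I Zpos by (simp add: divide_right_mono)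
  also have "\<dots> = rt + E * (\<integral>v. norm (v - vstar) \<partial>\<rho>) / Z" using Zpos by (simp add: field_simps)
  also have "\<dots> \<le> rt + E * (\<integral>v. norm (v - vstar) \<partial>\<rho>) / (measure \<rho> B * e0)"
  proof -
    have "0 \<le> E * (\<integral>v. norm (v - vstar) \<partial>\<rho>)" unfolding E_def by simp
    then show ?thesis using Zlb mpos e0pos B_def Zpos by (intro add_left_mono divide_left_mono) auto
  qed
  also have "rt + E * (\<integral>v. norm (v - vstar) \<partial>\<rho>) / (measure \<rho> B * e0) = rt + (E / e0) / measure \<rho> (ball vstar r) * (\<integral>v. norm (v - vstar) \<partial>\<rho>)"
    unfolding B_def by (simp add: divide_inverse mult_ac)
  also have "E / e0 = exp (- \<alpha> * (L - G))"
    unfolding E_def e0_def by (simp add: exp_diff[symmetric] algebra_simps)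
  finally show ?thesis .
qed

theorem mainTheorem16:
  fixes g :: "'a::euclidean_space \<Rightarrow> real" and vstar :: 'a
    and \<rho> :: "'a measure" and \<beta> :: real
  assumes "\<beta> > 0"
    and "continuous_on UNIV g"
    and "prob_space \<rho>" and "sets \<rho> = sets borel"
    and "integrable \<rho> (\<lambda>v. norm v)"
    and "vstar \<in> msupp \<rho>"
  shows
   "(\<forall>\<eta> \<nu>. \<eta> > 0 \<and> \<nu> > 0 \<and>
        (\<forall>v. g v - g vstar \<ge> (\<eta> * norm (v - vstar)) powr (1 / \<nu>) - \<beta>) \<longrightarrow>
      (\<forall>\<alpha> r q. \<alpha> > 0 \<and> r > 0 \<and> q > \<beta> \<longrightarrow>
         norm (v_alpha \<alpha> g \<rho> - vstar)
           \<le> (q + g_rad g vstar r) powr \<nu> / \<eta>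
              + exp (- \<alpha> * (q - \<beta>)) / measure \<rho> (ball vstar r)
                * (\<integral>v. norm (v - vstar) \<partial>\<rho>)))
    \<and>
    (\<forall>g_inf R0 \<eta> \<nu>. g_inf > 0 \<and> R0 > 0 \<and> \<eta> > 0 \<and> \<nu> > 0 \<and>
        (\<forall>v\<in>ball vstar R0. g v - g vstar \<ge> (\<eta> * norm (v - vstar)) powr (1 / \<nu>) - \<beta>) \<and>
        (\<forall>v. v \<notin> ball vstar R0 \<longrightarrow> g v - g vstar > g_inf) \<longrightarrow>
      (\<forall>\<alpha> r q. \<alpha> > 0 \<and> 0 < r \<and> r \<le> R0 \<and> q > \<beta> \<and> q - \<beta> + g_rad g vstar r \<le> g_inf \<longrightarrow>
         norm (v_alpha \<alpha> g \<rho> - vstar)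
           \<le> (q + g_rad g vstar r) powr \<nu> / \<eta>
              + exp (- \<alpha> * (q - \<beta>)) / measure \<rho> (ball vstar r)
                * (\<integral>v. norm (v - vstar) \<partial>\<rho>)))"
proof -
  have gm: "continuous_on UNIV g" by (fact assms(2))
  have mp: "\<And>r. r > 0 \<Longrightarrow> measure \<rho> (ball vstar r) > 0" using assms(6) unfolding msupp_def by auto
  have bdd: "\<And>r. bdd_above (g ` ball vstar r)"
  proof -
    fix r
    have "compact (g ` cball vstar r)"
      by (rule compact_continuous_image) (use gm continuous_on_subset in auto)
    then have "bdd_above (g ` cball vstar r)" by (simp add: bounded_imp_bdd_above compact_imp_bounded)
    then show "bdd_above (g ` ball vstar r)" by (rule bdd_above_mono) auto
  qed
  have near: "\<And>r. \<forall>v\<in>ball vstar r. g v \<le> g vstar + g_rad g vstar r"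
    unfolding g_rad_def using bdd by (auto intro: cSUP_upper)
  have grnn: "\<And>r. r > 0 \<Longrightarrow> g_rad g vstar r \<ge> 0"
    using near unfolding g_rad_def using bdd by (auto intro!: cSUP_upper)
  have key: "\<And>\<eta> \<nu> q G x::real. \<eta> > 0 \<Longrightarrow> \<nu> > 0 \<Longrightarrow> q + G > 0 \<Longrightarrow> (q + G) powr \<nu> / \<eta> \<le> x
      \<Longrightarrow> q + G \<le> (\<eta> * x) powr (1 / \<nu>)"
  proof -
    fix \<eta> \<nu> q G x :: real
    assume h: "\<eta> > 0" "\<nu> > 0" "q + G > 0" "(q + G) powr \<nu> / \<eta> \<le> x"
    have "(q + G) powr \<nu> \<le> \<eta> * x" using h by (simp add: field_simps)
    then have "((q + G) powr \<nu>) powr (1 / \<nu>) \<le> (\<eta> * x) powr (1 / \<nu>)"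
      using h by (intro powr_mono2) auto
    also have "((q + G) powr \<nu>) powr (1 / \<nu>) = q + G" using h by (simp add: powr_powr)
    finally show "q + G \<le> (\<eta> * x) powr (1 / \<nu>)" .
  qed
  show ?thesis
  proof (intro conjI allI impI)
    fix \<eta> \<nu> \<alpha> r q :: real
    assume A: "\<eta> > 0 \<and> \<nu> > 0 \<and> (\<forall>v. g v - g vstar \<ge> (\<eta> * norm (v - vstar)) powr (1 / \<nu>) - \<beta>)"
      and B: "\<alpha> > 0 \<and> r > 0 \<and> q > \<beta>"
    define G where "G = g_rad g vstar r"
    have G0: "G \<ge> 0" using grnn B G_def by auto
    show "norm (v_alpha \<alpha> g \<rho> - vstar)
           \<le> (q + g_rad g vstar r) powr \<nu> / \<eta>
              + exp (- \<alpha> * (q - \<beta>)) / measure \<rho> (ball vstar r)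
                * (\<integral>v. norm (v - vstar) \<partial>\<rho>)"
    proof -
      have "norm (v_alpha \<alpha> g \<rho> - vstar) \<le> (q + G) powr \<nu> / \<eta>
              + exp (- \<alpha> * ((q + G - \<beta>) - G)) / measure \<rho> (ball vstar r)
                * (\<integral>v. norm (v - vstar) \<partial>\<rho>)"
      proof (rule core[OF assms(3,4,5) gm, where c="g vstar - \<beta>"])
        show "\<forall>v. g vstar - \<beta> \<le> g v"
          using A by (smt (verit) powr_ge_zero)
        show "0 < \<alpha>" using B by simp
        show "0 \<le> (q + G) powr \<nu> / \<eta>" using A by simp
        show "\<forall>v. (q + G) powr \<nu> / \<eta> \<le> norm (v - vstar) \<longrightarrow> g vstar + (q + G - \<beta>) \<le> g v"
        proof (intro allI impI)
          fix v assume "(q + G) powr \<nu> / \<eta> \<le> norm (v - vstar)"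
          then have "q + G \<le> (\<eta> * norm (v - vstar)) powr (1 / \<nu>)"
            using key A B G0 assms(1) by (meson add_pos_nonneg less_trans)
          then show "g vstar + (q + G - \<beta>) \<le> g v" using A by smt
        qed
        show "\<forall>v\<in>ball vstar r. g v \<le> g vstar + G" using near G_def by auto
        show "0 < measure \<rho> (ball vstar r)" using mp B by auto
      qed
      then show ?thesis by (simp add: G_def)
    qed
  next
    fix g_inf R0 \<eta> \<nu> \<alpha> r q :: real
    assume A: "g_inf > 0 \<and> R0 > 0 \<and> \<eta> > 0 \<and> \<nu> > 0 \<and>
        (\<forall>v\<in>ball vstar R0. g v - g vstar \<ge> (\<eta> * norm (v - vstar)) powr (1 / \<nu>) - \<beta>) \<and>
        (\<forall>v. v \<notin> ball vstar R0 \<longrightarrow> g v - g vstar > g_inf)"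
      and B: "\<alpha> > 0 \<and> 0 < r \<and> r \<le> R0 \<and> q > \<beta> \<and> q - \<beta> + g_rad g vstar r \<le> g_inf"
    define G where "G = g_rad g vstar r"
    have G0: "G \<ge> 0" using grnn B G_def by auto
    show "norm (v_alpha \<alpha> g \<rho> - vstar)
           \<le> (q + g_rad g vstar r) powr \<nu> / \<eta>
              + exp (- \<alpha> * (q - \<beta>)) / measure \<rho> (ball vstar r)
                * (\<integral>v. norm (v - vstar) \<partial>\<rho>)"
    proof -
      have "norm (v_alpha \<alpha> g \<rho> - vstar) \<le> (q + G) powr \<nu> / \<eta>
              + exp (- \<alpha> * ((q + G - \<beta>) - G)) / measure \<rho> (ball vstar r)
                * (\<integral>v. norm (v - vstar) \<partial>\<rho>)"
      proof (rule core[OF assms(3,4,5) gm, where c="g vstar - \<beta>"])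
        show "\<forall>v. g vstar - \<beta> \<le> g v"
        proof
          fix v show "g vstar - \<beta> \<le> g v"
          proof (cases "v \<in> ball vstar R0")
            case True then show ?thesis using A by (smt (verit) powr_ge_zero)
          next
            case False then show ?thesis using A assms(1) by force
          qed
        qed
        show "0 < \<alpha>" using B by simp
        show "0 \<le> (q + G) powr \<nu> / \<eta>" using A by simp
        show "\<forall>v. (q + G) powr \<nu> / \<eta> \<le> norm (v - vstar) \<longrightarrow> g vstar + (q + G - \<beta>) \<le> g v"
        proof (intro allI impI)
          fix v assume h: "(q + G) powr \<nu> / \<eta> \<le> norm (v - vstar)"
          show "g vstar + (q + G - \<beta>) \<le> g v"
          proof (cases "v \<in> ball vstar R0")
            case True
            have "q + G \<le> (\<eta> * norm (v - vstar)) powr (1 / \<nu>)"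
              using key h A B G0 assms(1) by (meson add_pos_nonneg less_trans)
            then show ?thesis using A True by force
          next
            case False then show ?thesis using A B G_def by force
          qed
        qed
        show "\<forall>v\<in>ball vstar r. g v \<le> g vstar + G" using near G_def by auto
        show "0 < measure \<rho> (ball vstar r)" using mp B by auto
      qed
      then show ?thesis by (simp add: G_def)
    qed
  qed
qed

end
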